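(* A topological space $X$ is locally dense-connected if and only if $X$ is (homeomorphic to) the topological sum of a family of dense-connected spaces.
   Context: A space $Y$ is dense-connected if every dense subset of $Y$ (with the subspace topology) is connected. A space $X$ is locally dense-connected if for every $x\in X$ and every neighborhood $U$ of $x$ there is a neighborhood $V$ of $x$ with $V\subset U$ such that $V$ is dense-connected. *)

theory Defs
  imports "HOL-Analysis.Analysis"
begin

definition dense_connected :: "'a topology \<Rightarrow> bool" where
  "dense_connected Y \<longleftrightarrow>
     (\<forall>D. D \<subseteq> topspace Y \<and> Y closure_of D = topspace Y \<longrightarrow> connected_space (subtopology Y D))"

definition nbhd_of :: "'a topology \<Rightarrow> 'a \<Rightarrow> 'a set \<Rightarrow> bool" where
  "nbhd_of X x N \<longleftrightarrow> N \<subseteq> topspace X \<and> (\<exists>W. openin X W \<and> x \<in> W \<and> W \<subseteq> N)"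

definition locally_dense_connected :: "'a topology \<Rightarrow> bool" where
  "locally_dense_connected X \<longleftrightarrow>
     (\<forall>x \<in> topspace X. \<forall>U. nbhd_of X x U \<longrightarrow>
        (\<exists>V. nbhd_of X x V \<and> V \<subseteq> U \<and> dense_connected (subtopology X V)))"

end

theory Submission
  imports Defs
begin

definition hyperin :: "'a topology \<Rightarrow> 'a set \<Rightarrow> bool" where
  "hyperin X V \<longleftrightarrow> (\<forall>P Q. openin X P \<and> openin X Q \<and> P \<subseteq> V \<and> Q \<subseteq> V \<and> P \<noteq> {} \<and> Q \<noteq> {}
       \<longrightarrow> P \<inter> Q \<noteq> {})"

lemma hyperinD:
  "hyperin X V \<Longrightarrow> openin X P \<Longrightarrow> openin X Q \<Longrightarrow> P \<subseteq> V \<Longrightarrow> Q \<subseteq> V \<Longrightarrow> P \<noteq> {} \<Longrightarrow> Q \<noteq> {}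
   \<Longrightarrow> P \<inter> Q \<noteq> {}"
  unfolding hyperin_def by blast

lemma hyperinI:
  "(\<And>P Q. openin X P \<Longrightarrow> openin X Q \<Longrightarrow> P \<subseteq> V \<Longrightarrow> Q \<subseteq> V \<Longrightarrow> P \<noteq> {} \<Longrightarrow> Q \<noteq> {}
   \<Longrightarrow> P \<inter> Q \<noteq> {}) \<Longrightarrow> hyperin X V"
  unfolding hyperin_def by blast

lemma dc_imp_hyper:
  assumes "dense_connected Y"
  shows "hyperin Y (topspace Y)"
  unfolding hyperin_def
proof (intro allI impI, elim conjE)
  fix A B
  assume A: "openin Y A" and B: "openin Y B" and "A \<subseteq> topspace Y" "B \<subseteq> topspace Y"
    and An: "A \<noteq> {}" and Bn: "B \<noteq> {}"
  show "A \<inter> B \<noteq> {}"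
  proof
    assume disj: "A \<inter> B = {}"
    define C where "C = Y closure_of (A \<union> B)"
    define D where "D = A \<union> B \<union> (topspace Y - C)"
    have AC: "A \<union> B \<subseteq> C" unfolding C_def
      by (rule closure_of_subset) (use openin_subset[OF A] openin_subset[OF B] in blast)
    have Dsub: "D \<subseteq> topspace Y" unfolding D_def using openin_subset[OF A] openin_subset[OF B] by blast
    have "C \<union> (topspace Y - C) \<subseteq> Y closure_of D"
    proof -
      have "C \<subseteq> Y closure_of D" unfolding C_def D_def by (rule closure_of_mono) blast
      moreover have "topspace Y - C \<subseteq> Y closure_of D"
        using closure_of_subset[OF Dsub] unfolding D_def by blast
      ultimately show ?thesis by blast
    qed
    hence "Y closure_of D = topspace Y"
      using closure_of_subset_topspace[of Y D] by blast
    hence "connected_space (subtopology Y D)"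
      using assms Dsub unfolding dense_connected_def by simp
    hence "connectedin Y D" using Dsub by (simp add: connectedin_def)
    moreover have "openin Y (B \<union> (topspace Y - C))"
      unfolding C_def by (rule openin_Un[OF B openin_diff[OF openin_topspace closedin_closure_of]])
    ultimately have nc: "\<not> (openin Y A \<and> openin Y (B \<union> (topspace Y - C)) \<and>
        D \<subseteq> A \<union> (B \<union> (topspace Y - C)) \<and> A \<inter> (B \<union> (topspace Y - C)) \<inter> D = {} \<and>
        A \<inter> D \<noteq> {} \<and> (B \<union> (topspace Y - C)) \<inter> D \<noteq> {})"
      unfolding connectedin by (simp only: not_ex de_Morgan_conj) blast
    have "D \<subseteq> A \<union> (B \<union> (topspace Y - C))" unfolding D_def by blast
    moreover have "A \<inter> (B \<union> (topspace Y - C)) \<inter> D = {}" using AC disj by blast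
    moreover have "A \<inter> D \<noteq> {}" using An unfolding D_def by blast
    moreover have "(B \<union> (topspace Y - C)) \<inter> D \<noteq> {}" using Bn unfolding D_def by blast
    ultimately show False using nc A \<open>openin Y (B \<union> (topspace Y - C))\<close> by blast
  qed
qed

lemma hyper_imp_dc:
  assumes "hyperin Y (topspace Y)"
  shows "dense_connected Y"
  unfolding dense_connected_def
proof (intro allI impI, elim conjE)
  fix D assume Dsub: "D \<subseteq> topspace Y" and dense: "Y closure_of D = topspace Y"
  have "connectedin Y D"
    unfolding connectedin
  proof (intro conjI Dsub notI, elim exE conjE)
    fix E1 E2 assume o1: "openin Y E1" and o2: "openin Y E2" and "D \<subseteq> E1 \<union> E2"
      and e: "E1 \<inter> E2 \<inter> D = {}" and n1: "E1 \<inter> D \<noteq> {}" and n2: "E2 \<inter> D \<noteq> {}"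
    have "E1 \<inter> E2 \<noteq> {}"
      by (rule hyperinD[OF assms o1 o2 openin_subset[OF o1] openin_subset[OF o2]]) (use n1 n2 in auto)
    moreover have "openin Y (E1 \<inter> E2)" using o1 o2 by blast
    ultimately have "D \<inter> (E1 \<inter> E2) \<noteq> {}" using dense[unfolded dense_intersects_open] by blast
    with e show False by blast
  qed
  thus "connected_space (subtopology Y D)" by (simp add: connectedin_def)
qed

lemma hyperin_sub:
  assumes "openin X V" "hyperin X V"
  shows "dense_connected (subtopology X V)"
proof (rule hyper_imp_dc)
  show "hyperin (subtopology X V) (topspace (subtopology X V))"
  proof (rule hyperinI)
    fix P Q assume "openin (subtopology X V) P" "openin (subtopology X V) Q" "P \<noteq> {}" "Q \<noteq> {}"
    then show "P \<inter> Q \<noteq> {}" using hyperinD[OF assms(2), of P Q]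
      unfolding openin_open_subtopology[OF assms(1)] by blast
  qed
qed

lemma dc_sub_hyperin:
  assumes "dense_connected (subtopology X V)" "openin X W" "W \<subseteq> V"
  shows "hyperin X W"
proof -
  have h: "hyperin (subtopology X V) (topspace (subtopology X V))" by (rule dc_imp_hyper[OF assms(1)])
  show ?thesis
  proof (rule hyperinI)
    fix P Q assume oP: "openin X P" and oQ: "openin X Q" and PW: "P \<subseteq> W" and QW: "Q \<subseteq> W"
      and n: "P \<noteq> {}" "Q \<noteq> {}"
    have PV: "P \<inter> V = P" using PW assms(3) by blast
    have QV: "Q \<inter> V = Q" using QW assms(3) by blast
    have "openin (subtopology X V) P" using openin_subtopology_Int[OF oP, of V] PV by simp
    moreover have "openin (subtopology X V) Q" using openin_subtopology_Int[OF oQ, of V] QV by simp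
    ultimately show "P \<inter> Q \<noteq> {}"
      using hyperinD[OF h] openin_subset n by blast
  qed
qed

lemma union_hyper:
  assumes "\<And>A. A \<in> F \<Longrightarrow> openin X A \<and> hyperin X A \<and> x \<in> A"
  shows "hyperin X (\<Union>F)"
proof (rule hyperinI)
  fix P Q assume oP: "openin X P" and oQ: "openin X Q" and PF: "P \<subseteq> \<Union>F" and QF: "Q \<subseteq> \<Union>F"
    and Pn: "P \<noteq> {}" and Qn: "Q \<noteq> {}"
  obtain p where p: "p \<in> P" using Pn by blast
  then obtain A where A: "A \<in> F" "p \<in> A" using PF by blast
  obtain q where q: "q \<in> Q" using Qn by blast
  then obtain B where B: "B \<in> F" "q \<in> B" using QF by blast
  have hA: "openin X A" "hyperin X A" "x \<in> A" using assms[OF A(1)] by auto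
  have hB: "openin X B" "hyperin X B" "x \<in> B" using assms[OF B(1)] by auto
  have "(P \<inter> A) \<inter> (A \<inter> B) \<noteq> {}"
    by (rule hyperinD[OF hA(2) openin_Int[OF oP hA(1)] openin_Int[OF hA(1) hB(1)]]) (use hA hB p A in auto)
  hence "P \<inter> B \<noteq> {}" by blast
  hence "(P \<inter> B) \<inter> (Q \<inter> B) \<noteq> {}"
    by (rule hyperinD[OF hB(2) openin_Int[OF oP hB(1)] openin_Int[OF oQ hB(1)], rotated 2]) (use B q in auto)
  thus "P \<inter> Q \<noteq> {}" by blast
qed

lemma dir1:
  fixes X :: "'a topology" and T :: "'i \<Rightarrow> 'b topology"
  assumes dc: "\<forall>i \<in> I. dense_connected (T i)" and hom: "X homeomorphic_space sum_topology T I"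
  shows "locally_dense_connected X"
  unfolding locally_dense_connected_def
proof (intro ballI allI impI)
  fix x U assume x: "x \<in> topspace X" and "nbhd_of X x U"
  then obtain W where W: "openin X W" "x \<in> W" "W \<subseteq> U" unfolding nbhd_of_def by blast
  obtain f g where fg: "homeomorphic_maps X (sum_topology T I) f g"
    using hom unfolding homeomorphic_space_def by blast
  have cf: "continuous_map X (sum_topology T I) f" and cg: "continuous_map (sum_topology T I) X g"
    and gf: "\<And>x. x \<in> topspace X \<Longrightarrow> g (f x) = x"
    and fgi: "\<And>y. y \<in> topspace (sum_topology T I) \<Longrightarrow> f (g y) = y"
    using fg unfolding homeomorphic_maps_def by auto
  have om: "open_map X (sum_topology T I) f"
    by (rule homeomorphic_imp_open_map) (use fg homeomorphic_map_maps in blast)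
  obtain i y where fx: "f x = (i, y)" by (cases "f x")
  have fxS: "f x \<in> topspace (sum_topology T I)" using cf x by (meson continuous_map_image_subset_topspace image_subset_iff)
  hence iI: "i \<in> I" using fx by auto
  define Si where "Si = Sigma I (\<lambda>j. if j = i then topspace (T i) else {})"
  have oSi: "openin (sum_topology T I) Si" unfolding Si_def openin_disjoint_union by auto
  define V' where "V' = Si \<inter> {p \<in> topspace (sum_topology T I). g p \<in> W}"
  have oV': "openin (sum_topology T I) V'" unfolding V'_def
    using oSi openin_continuous_map_preimage[OF cg W(1)] by (rule openin_Int)
  define V where "V = {z \<in> topspace X. f z \<in> V'}"
  have oV: "openin X V" unfolding V_def using oV' cf by (simp add: openin_continuous_map_preimage)
  have yT: "y \<in> topspace (T i)" using fxS fx by simp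
  have "f x \<in> Si" unfolding Si_def using fx iI yT by simp
  hence "f x \<in> V'" unfolding V'_def using fxS gf[OF x] W(2) by simp
  hence xV: "x \<in> V" unfolding V_def using x by simp
  have VW: "V \<subseteq> W"
  proof
    fix z assume "z \<in> V"
    hence z: "z \<in> topspace X" "g (f z) \<in> W" unfolding V_def V'_def by simp_all
    thus "z \<in> W" using gf[OF z(1)] by simp
  qed
  have hT: "hyperin (T i) (topspace (T i))" using dc_imp_hyper bspec[OF dc iI] .
  have "hyperin X V"
  proof (rule hyperinI)
    fix P Q assume oP: "openin X P" and oQ: "openin X Q" and PV: "P \<subseteq> V" and QV: "Q \<subseteq> V"
      and Pn: "P \<noteq> {}" and Qn: "Q \<noteq> {}"
    have ofP: "openin (sum_topology T I) (f ` P)" and ofQ: "openin (sum_topology T I) (f ` Q)"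
      using om oP oQ unfolding open_map_def by auto
    have fPV: "f ` P \<subseteq> Si" "f ` Q \<subseteq> Si" using PV QV unfolding V_def V'_def by auto
    define P' where "P' = {z. (i, z) \<in> f ` P}"
    define Q' where "Q' = {z. (i, z) \<in> f ` Q}"
    have o1: "openin (T i) P'" and o2: "openin (T i) Q'"
      using ofP ofQ iI unfolding P'_def Q'_def openin_sum_topology by auto
    moreover have nP: "P' \<noteq> {}"
    proof -
      obtain p where p: "p \<in> P" using Pn by blast
      hence "f p \<in> Si" using fPV by blast
      then obtain z where "f p = (i, z)" unfolding Si_def by (auto split: if_splits)
      hence "z \<in> P'" unfolding P'_def using p by (metis image_eqI mem_Collect_eq)
      thus ?thesis by blast
    qed
    moreover have nQ: "Q' \<noteq> {}"
    proof -
      obtain p where p: "p \<in> Q" using Qn by blast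
      hence "f p \<in> Si" using fPV by blast
      then obtain z where "f p = (i, z)" unfolding Si_def by (auto split: if_splits)
      hence "z \<in> Q'" unfolding Q'_def using p by (metis image_eqI mem_Collect_eq)
      thus ?thesis by blast
    qed
    have "P' \<inter> Q' \<noteq> {}" using hyperinD[OF hT o1 o2 openin_subset[OF o1] openin_subset[OF o2] nP nQ] .
    then obtain z where "(i, z) \<in> f ` P" "(i, z) \<in> f ` Q" unfolding P'_def Q'_def by blast
    then obtain p q where "p \<in> P" "q \<in> Q" "f p = f q" by (metis imageE)
    moreover have "p \<in> topspace X" "q \<in> topspace X" using \<open>p \<in> P\<close> \<open>q \<in> Q\<close> openin_subset[OF oP] openin_subset[OF oQ] by blast+
    ultimately have "p = q" using gf by (metis)
    thus "P \<inter> Q \<noteq> {}" using \<open>p \<in> P\<close> \<open>q \<in> Q\<close> by blast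
  qed
  hence "dense_connected (subtopology X V)" using hyperin_sub oV by blast
  moreover have "nbhd_of X x V" unfolding nbhd_of_def using oV xV openin_subset[OF oV] by blast
  ultimately show "\<exists>V. nbhd_of X x V \<and> V \<subseteq> U \<and> dense_connected (subtopology X V)"
    using VW W(3) by blast
qed

lemma dir2:
  fixes X :: "'a topology"
  assumes L: "locally_dense_connected X"
  shows "\<exists>(I :: 'a set set) (T :: 'a set \<Rightarrow> 'a topology).
               (\<forall>i \<in> I. dense_connected (T i)) \<and> X homeomorphic_space sum_topology T I"
proof -
  define H where "H W \<longleftrightarrow> openin X W \<and> hyperin X W" for W
  have lh: "\<exists>V. H V \<and> x \<in> V \<and> V \<subseteq> W" if x: "x \<in> topspace X" and W: "openin X W" "x \<in> W" for x W
  proof -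
    have "nbhd_of X x W" unfolding nbhd_of_def using W openin_subset by blast
    then obtain V where V: "nbhd_of X x V" "V \<subseteq> W" "dense_connected (subtopology X V)"
      using L x unfolding locally_dense_connected_def by blast
    then obtain W' where W': "openin X W'" "x \<in> W'" "W' \<subseteq> V" unfolding nbhd_of_def by blast
    have "hyperin X W'" using dc_sub_hyperin[OF V(3) W'(1,3)] .
    thus ?thesis using W' V unfolding H_def by blast
  qed
  define M where "M x = \<Union>{W. H W \<and> x \<in> W}" for x
  have M1: "x \<in> M x" if "x \<in> topspace X" for x
    using lh[OF that openin_topspace that] unfolding M_def by blast
  have M2: "H (M x)" for x
  proof -
    have "openin X (\<Union>{W. H W \<and> x \<in> W})" by (rule openin_Union) (auto simp: H_def)
    moreover have "hyperin X (\<Union>{W. H W \<and> x \<in> W})" by (rule union_hyper) (auto simp: H_def)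
    ultimately show ?thesis unfolding H_def M_def by blast
  qed
  have M3: "M x \<subseteq> topspace X" for x using M2 openin_subset unfolding H_def by blast
  have M4: "M y = M x" if "y \<in> M x" for x y
  proof
    show "M x \<subseteq> M y" using M2[of x] that unfolding M_def[of y] by blast
    have "H (\<Union>{M x, M y})"
    proof -
      have o: "openin X (\<Union>{M x, M y})" using M2 unfolding H_def by auto
      have "y \<in> M y" using M1 M3 that by blast
      hence "hyperin X (\<Union>{M x, M y})" by (intro union_hyper) (use M2 that in \<open>auto simp: H_def\<close>)
      thus ?thesis using o unfolding H_def by blast
    qed
    moreover have "x \<in> \<Union>{M x, M y}" using that unfolding M_def by blast
    ultimately show "M y \<subseteq> M x" unfolding M_def[of x] by blast
  qed
  define I where "I = M ` topspace X"
  define T where "T = (\<lambda>i::'a set. subtopology X i)"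
  have oi: "openin X i" if "i \<in> I" for i using that M2 unfolding I_def H_def by blast
  have tsS: "topspace (sum_topology T I) = {(i, y). i \<in> I \<and> y \<in> i}"
  proof -
    have "y \<in> topspace X" if "y \<in> M x" for x y using M3 that by blast
    thus ?thesis unfolding T_def I_def by auto
  qed
  have "homeomorphic_maps X (sum_topology T I) (\<lambda>x. (M x, x)) snd"
    unfolding homeomorphic_maps_def
  proof (intro conjI ballI)
    show "continuous_map X (sum_topology T I) (\<lambda>x. (M x, x))"
      unfolding continuous_map_def
    proof (intro conjI allI impI ballI Pi_I)
      fix x assume "x \<in> topspace X"
      thus "(M x, x) \<in> topspace (sum_topology T I)" by (subst tsS) (auto simp: I_def M1)
    next
      fix U assume U: "openin (sum_topology T I) U"
      have eq: "{x \<in> topspace X. (M x, x) \<in> U} = (\<Union>i\<in>I. {y. (i, y) \<in> U})"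
      proof
        show "{x \<in> topspace X. (M x, x) \<in> U} \<subseteq> (\<Union>i\<in>I. {y. (i, y) \<in> U})"
          unfolding I_def by blast
        show "(\<Union>i\<in>I. {y. (i, y) \<in> U}) \<subseteq> {x \<in> topspace X. (M x, x) \<in> U}"
        proof clarify
          fix i y assume iI: "i \<in> I" and iy: "(i, y) \<in> U"
          have "(i, y) \<in> topspace (sum_topology T I)" using U iy openin_subset by blast
          hence yi: "y \<in> i" unfolding tsS by auto
          then obtain z where "i = M z" using iI unfolding I_def by blast
          hence "M y = i" using M4 yi by blast
          thus "y \<in> topspace X \<and> (M y, y) \<in> U" using iy yi M3 \<open>i = M z\<close> by blast
        qed
      qed
      have "openin X {y. (i, y) \<in> U}" if "i \<in> I" for i
      proof -
        have "openin (T i) {y. (i, y) \<in> U}" using U that unfolding openin_sum_topology by blast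
        thus ?thesis unfolding T_def openin_open_subtopology[OF oi[OF that]] by blast
      qed
      thus "openin X {x \<in> topspace X. (M x, x) \<in> U}" unfolding eq by blast
    qed
    show "continuous_map (sum_topology T I) X snd"
      unfolding continuous_map_def
    proof (intro conjI allI impI ballI Pi_I)
      fix p assume "p \<in> topspace (sum_topology T I)"
      hence "snd p \<in> fst p" by (subst (asm) tsS) auto
      moreover have "fst p \<in> I" using \<open>p \<in> topspace (sum_topology T I)\<close> by (subst (asm) tsS) auto
      ultimately show "snd p \<in> topspace X" using M3 unfolding I_def by blast
    next
      fix V assume V: "openin X V"
      show "openin (sum_topology T I) {p \<in> topspace (sum_topology T I). snd p \<in> V}"
        unfolding openin_sum_topology
      proof (intro conjI ballI)
        show "{p \<in> topspace (sum_topology T I). snd p \<in> V} \<subseteq> Sigma I (topspace \<circ> T)" by auto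
        fix i assume iI: "i \<in> I"
        have "{x. (i, x) \<in> {p \<in> topspace (sum_topology T I). snd p \<in> V}} = i \<inter> V"
          unfolding tsS using iI by auto
        moreover have "openin (T i) (i \<inter> V)"
          unfolding T_def openin_open_subtopology[OF oi[OF iI]] using oi[OF iI] V by auto
        ultimately show "openin (T i) {x. (i, x) \<in> {p \<in> topspace (sum_topology T I). snd p \<in> V}}"
          by simp
      qed
    qed
    fix x assume "x \<in> topspace X" thus "snd (M x, x) = x" by simp
  next
    fix p assume "p \<in> topspace (sum_topology T I)"
    then obtain i y where p: "p = (i, y)" "i \<in> I" "y \<in> i" unfolding tsS by auto
    then obtain z where "i = M z" unfolding I_def by blast
    thus "(M (snd p), snd p) = p" using M4 p by auto
  qed
  hence "X homeomorphic_space sum_topology T I" unfolding homeomorphic_space_def by blast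
  moreover have "\<forall>i \<in> I. dense_connected (T i)"
    unfolding T_def using M2 hyperin_sub unfolding H_def I_def by blast
  ultimately show ?thesis by blast
qed

theorem theorem4p17:
  fixes X :: "'a topology"
  shows "(\<forall>(I :: 'i set) (T :: 'i \<Rightarrow> 'b topology).
            (\<forall>i \<in> I. dense_connected (T i)) \<and> X homeomorphic_space sum_topology T I
            \<longrightarrow> locally_dense_connected X)
       \<and> (locally_dense_connected X \<longrightarrow>
            (\<exists>(I :: 'a set set) (T :: 'a set \<Rightarrow> 'a topology).
               (\<forall>i \<in> I. dense_connected (T i)) \<and> X homeomorphic_space sum_topology T I))"
  using dir1 dir2 by blast

end
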